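(* Let $M\in\mathrm{M}_n(\mathbb{K})$ be a cyclic matrix with minimal polynomial $f\in\mathbb{K}[x]$, and let $\mathcal{C}\subseteq\mathbb{L}^n$ be an $M$-cyclic code with generator polynomial $g\in\mathbb{L}[x]$; write $f=gh$. Then $\mathcal{C}^\perp$ is an $M^t$-cyclic code (with $M^t$ cyclic with minimal polynomial $f$), and its generator polynomial is $h$.
   Context: Let $\mathbb{L}/\mathbb{K}$ be a field extension of finite degree $m\ge n$. Vectors are row vectors; $\mathcal{C}^\perp=\{c'\in\mathbb{L}^n:\sum_jc'_jc_j=0\ \forall c\in\mathcal{C}\}$. A matrix $A\in\mathrm{M}_n(\mathbb{K})$ is cyclic if there is $v\in\mathbb{K}^n$ (a cyclic vector) with $(v,vA^t,\dots,v(A^t)^{n-1})$ a basis; equivalently its minimal polynomial $f$ has degree $n$. An $A$-cyclic code is an $\mathbb{L}$-subspace $\mathcal{C}\subseteq\mathbb{L}^n$ with $cA^t\in\mathcal{C}$ for all $c\in\mathcal{C}$. For a monic divisor $g$ of $f$ in $\mathbb{L}[x]$, $\mathcal{C}_g=\{v\,g(A)^tP(A)^t:P\in\mathbb{L}[x]\}$ (independent of the cyclic vector $v\in\mathbb{K}^n$, of dimension $n-\deg g$); every $A$-cyclic code equals $\mathcal{C}_g$ for a unique monic divisor $g$ of $f$, its generator polynomial. *)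

theory Defs
  imports "Jordan_Normal_Form.Matrix" "HOL-Computational_Algebra.Polynomial"
begin

text \<open>The big field L is the type 'a; the subfield K is a subset of 'a.\<close>

definition subfield :: "'a::field set \<Rightarrow> bool" where
  "subfield K \<longleftrightarrow> 0 \<in> K \<and> 1 \<in> K \<and> (\<forall>x\<in>K. \<forall>y\<in>K. x + y \<in> K \<and> x * y \<in> K)
     \<and> (\<forall>x\<in>K. - x \<in> K) \<and> (\<forall>x\<in>K. inverse x \<in> K)"

definition ext_degree :: "'a::field set \<Rightarrow> nat \<Rightarrow> bool" where
  "ext_degree K m \<longleftrightarrow> (\<exists>b :: nat \<Rightarrow> 'a.
      (\<forall>c. (\<forall>i<m. c i \<in> K) \<longrightarrow> (\<Sum>i<m. c i * b i) = 0 \<longrightarrow> (\<forall>i<m. c i = 0)) \<and>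
      (\<forall>x. \<exists>c. (\<forall>i<m. c i \<in> K) \<and> x = (\<Sum>i<m. c i * b i)))"

definition mat_eval :: "'a::comm_ring_1 poly \<Rightarrow> 'a mat \<Rightarrow> 'a mat" where
  "mat_eval p A = foldr (\<lambda>c B. c \<cdot>\<^sub>m 1\<^sub>m (dim_row A) + A * B) (coeffs p) (0\<^sub>m (dim_row A) (dim_row A))"

definition K_vecs :: "'a set \<Rightarrow> nat \<Rightarrow> 'a vec set" where
  "K_vecs K n = {w \<in> carrier_vec n. \<forall>i<n. w $ i \<in> K}"

definition K_mat :: "'a set \<Rightarrow> 'a mat \<Rightarrow> bool" where
  "K_mat K A \<longleftrightarrow> (\<forall>i<dim_row A. \<forall>j<dim_col A. A $$ (i,j) \<in> K)"

text \<open>Row vector v times A^t is the column vector A *v v; so (v, vA^t, ..., v(A^t)^(n-1))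
  is (A^i *v v) for i < n. It must be a K-basis of K^n.\<close>
definition cyclic_vector :: "'a::field set \<Rightarrow> 'a mat \<Rightarrow> 'a vec \<Rightarrow> bool" where
  "cyclic_vector K A v \<longleftrightarrow> (let n = dim_row A in v \<in> K_vecs K n \<and>
     (\<forall>c. (\<forall>i<n. c i \<in> K) \<longrightarrow> finsum_vec TYPE('a) n (\<lambda>i. c i \<cdot>\<^sub>v ((A ^\<^sub>m i) *\<^sub>v v)) {..<n} = 0\<^sub>v n
           \<longrightarrow> (\<forall>i<n. c i = 0)) \<and>
     (\<forall>w\<in>K_vecs K n. \<exists>c. (\<forall>i<n. c i \<in> K) \<and>
           w = finsum_vec TYPE('a) n (\<lambda>i. c i \<cdot>\<^sub>v ((A ^\<^sub>m i) *\<^sub>v v)) {..<n}))"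

definition cyclic_mat :: "'a::field set \<Rightarrow> 'a mat \<Rightarrow> bool" where
  "cyclic_mat K A \<longleftrightarrow> (\<exists>v. cyclic_vector K A v)"

definition is_min_poly :: "'a::field set \<Rightarrow> 'a mat \<Rightarrow> 'a poly \<Rightarrow> bool" where
  "is_min_poly K A f \<longleftrightarrow> lead_coeff f = 1 \<and> (\<forall>i. coeff f i \<in> K) \<and>
     mat_eval f A = 0\<^sub>m (dim_row A) (dim_row A) \<and>
     (\<forall>q. q \<noteq> 0 \<longrightarrow> (\<forall>i. coeff q i \<in> K) \<longrightarrow> mat_eval q A = 0\<^sub>m (dim_row A) (dim_row A)
          \<longrightarrow> degree f \<le> degree q)"

text \<open>A-cyclic code over L (= the type 'a): L-subspace of L^n stable under c |-> c A^t.\<close>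
definition cyclic_code :: "'a::field mat \<Rightarrow> 'a vec set \<Rightarrow> bool" where
  "cyclic_code A C \<longleftrightarrow> C \<subseteq> carrier_vec (dim_row A) \<and> 0\<^sub>v (dim_row A) \<in> C \<and>
     (\<forall>x\<in>C. \<forall>y\<in>C. x + y \<in> C) \<and> (\<forall>a. \<forall>x\<in>C. a \<cdot>\<^sub>v x \<in> C) \<and>
     (\<forall>c\<in>C. A *\<^sub>v c \<in> C)"

text \<open>C_g = { v g(A)^t P(A)^t : P in L[x] }, written with column vectors.\<close>
definition code_of :: "'a::field mat \<Rightarrow> 'a vec \<Rightarrow> 'a poly \<Rightarrow> 'a vec set" where
  "code_of A v g = {mat_eval P A *\<^sub>v (mat_eval g A *\<^sub>v v) | P. True}"

definition is_gen_poly :: "'a::field set \<Rightarrow> 'a mat \<Rightarrow> 'a poly \<Rightarrow> 'a vec set \<Rightarrow> 'a poly \<Rightarrow> bool" where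
  "is_gen_poly K A f C g \<longleftrightarrow> lead_coeff g = 1 \<and> g dvd f \<and>
     (\<exists>v. cyclic_vector K A v \<and> C = code_of A v g)"

definition dual_code :: "nat \<Rightarrow> 'a::field vec set \<Rightarrow> 'a vec set" where
  "dual_code n C = {c' \<in> carrier_vec n. \<forall>c\<in>C. c' \<bullet> c = 0}"

end

theory Submission
  imports Defs "Jordan_Normal_Form.Determinant"
begin


lemma sK0: "subfield K \<Longrightarrow> 0 \<in> K" unfolding subfield_def by auto
lemma sK1: "subfield K \<Longrightarrow> 1 \<in> K" unfolding subfield_def by auto
lemma sK_add: "subfield K \<Longrightarrow> x \<in> K \<Longrightarrow> y \<in> K \<Longrightarrow> x + y \<in> K" unfolding subfield_def by auto
lemma sK_mult: "subfield K \<Longrightarrow> x \<in> K \<Longrightarrow> y \<in> K \<Longrightarrow> x * y \<in> K" unfolding subfield_def by auto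
lemma sK_uminus: "subfield K \<Longrightarrow> x \<in> K \<Longrightarrow> - x \<in> K" unfolding subfield_def by auto
lemma sK_inverse: "subfield K \<Longrightarrow> x \<in> K \<Longrightarrow> inverse x \<in> K" unfolding subfield_def by auto
lemma sK_minus: "subfield K \<Longrightarrow> x \<in> K \<Longrightarrow> y \<in> K \<Longrightarrow> x - y \<in> K"
  using sK_add sK_uminus by (metis diff_conv_add_uminus)

lemma sK_sum: assumes K: "subfield K" and f: "\<And>i. i \<in> A \<Longrightarrow> f i \<in> K" shows "sum f A \<in> K"
proof (cases "finite A")
  case True
  then show ?thesis using f
  proof (induct A rule: finite_induct)
    case empty then show ?case using sK0[OF K] by simp
  next
    case (insert x F) then show ?case by (simp add: sK_add[OF K])
  qed
qed (simp add: sK0[OF K])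

lemma sK_prod: assumes K: "subfield K" and f: "\<And>i. i \<in> A \<Longrightarrow> f i \<in> K" shows "prod f A \<in> K"
proof (cases "finite A")
  case True
  then show ?thesis using f
  proof (induct A rule: finite_induct)
    case empty then show ?case using sK1[OF K] by simp
  next
    case (insert x F) then show ?case by (simp add: sK_mult[OF K])
  qed
qed (simp add: sK1[OF K])

lemma sK_power: assumes K: "subfield K" and x: "x \<in> K" shows "x ^ k \<in> K"
  by (induct k) (auto simp: sK1[OF K] sK_mult[OF K] x)

definition Kvec :: "'a set \<Rightarrow> 'a vec \<Rightarrow> bool" where
  "Kvec K x \<longleftrightarrow> (\<forall>i<dim_vec x. x $ i \<in> K)"

lemma K_vecs_iff: "w \<in> K_vecs K n \<longleftrightarrow> w \<in> carrier_vec n \<and> Kvec K w"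
  unfolding K_vecs_def Kvec_def by auto

lemma K_scalar_prod: assumes K: "subfield K" and "Kvec K x" "Kvec K y" "dim_vec x = dim_vec y"
  shows "x \<bullet> y \<in> K"
  unfolding scalar_prod_def using assms unfolding Kvec_def
  by (intro sK_sum[OF K] sK_mult[OF K]) auto

lemma Kvec_row: "K_mat K A \<Longrightarrow> i < dim_row A \<Longrightarrow> Kvec K (row A i)"
  unfolding K_mat_def Kvec_def by auto
lemma Kvec_col: "K_mat K A \<Longrightarrow> j < dim_col A \<Longrightarrow> Kvec K (col A j)"
  unfolding K_mat_def Kvec_def by auto

lemma K_mat_mult: assumes K: "subfield K" and A: "K_mat K A" and B: "K_mat K B" and d: "dim_col A = dim_row B"
  shows "K_mat K (A * B)"
  unfolding K_mat_def
  using K_scalar_prod[OF K Kvec_row[OF A] Kvec_col[OF B]] d by auto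

lemma Kvec_mult: assumes K: "subfield K" and A: "K_mat K A" and x: "Kvec K x" and d: "dim_col A = dim_vec x"
  shows "Kvec K (A *\<^sub>v x)"
  unfolding Kvec_def
  using K_scalar_prod[OF K Kvec_row[OF A] x] d by auto

lemma K_mat_one: "subfield K \<Longrightarrow> K_mat K (1\<^sub>m n)"
  unfolding K_mat_def by (auto simp: sK0 sK1)

lemma K_mat_pow: assumes K: "subfield K" and A: "K_mat K A" and sq: "dim_row A = dim_col A"
  shows "K_mat K (A ^\<^sub>m k)"
proof (induct k)
  case 0 then show ?case using K_mat_one[OF K] by simp
next
  case (Suc k) then show ?case using K_mat_mult[OF K Suc A] sq by simp
qed

lemma K_mat_transpose: "K_mat K A \<Longrightarrow> K_mat K (transpose_mat A)"
  unfolding K_mat_def by auto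

lemma K_mat_smult: "subfield K \<Longrightarrow> k \<in> K \<Longrightarrow> K_mat K A \<Longrightarrow> K_mat K (k \<cdot>\<^sub>m A)"
  unfolding K_mat_def by (auto simp: sK_mult)

lemma K_det: assumes K: "subfield K" and A: "K_mat K A" shows "det A \<in> K"
proof -
  have s: "(of_int (sign p) :: 'a) \<in> K" for p :: "nat \<Rightarrow> nat"
    using signof_pm_one[of p] sK1[OF K] sK_uminus[OF K sK1[OF K]] by (metis insertE empty_iff)
  show ?thesis unfolding det_def
    using A unfolding K_mat_def
    by (auto intro!: sK_sum[OF K] sK_mult[OF K] s sK_prod[OF K] simp: sK0[OF K] permutes_def)
qed

lemma K_mat_delete: "K_mat K A \<Longrightarrow> K_mat K (mat_delete A i j)"
  unfolding K_mat_def mat_delete_def by auto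

lemma K_adj: assumes K: "subfield K" and A: "K_mat K A" shows "K_mat K (adj_mat A)"
  unfolding K_mat_def adj_mat_def cofactor_def
  by (auto intro!: sK_mult[OF K] sK_power[OF K] sK_uminus[OF K] sK1[OF K] K_det[OF K] K_mat_delete A)


section \<open>Polynomial evaluation at matrices\<close>

lemma me_0: "mat_eval 0 A = 0\<^sub>m (dim_row A) (dim_row A)" unfolding mat_eval_def by simp

lemma me_pCons: assumes A: "A \<in> carrier_mat n n"
  shows "mat_eval (pCons a p) A = a \<cdot>\<^sub>m 1\<^sub>m n + A * mat_eval p A"
proof (cases "a = 0 \<and> p = 0")
  case True
  have "0 \<cdot>\<^sub>m 1\<^sub>m n + 0\<^sub>m n n = (0\<^sub>m n n :: 'a mat)" by (intro eq_matI) auto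
  then show ?thesis using A True by (simp add: me_0 right_mult_zero_mat)
next
  case False
  then have "coeffs (pCons a p) = a # coeffs p" by (auto simp: coeffs_pCons_eq_cCons cCons_def)
  then show ?thesis using A unfolding mat_eval_def by simp
qed

lemma me_carrier: assumes A: "A \<in> carrier_mat n n" shows "mat_eval p A \<in> carrier_mat n n"
proof (induct p rule: pCons_induct)
  case 0 then show ?case using A by (simp add: me_0)
next
  case (pCons a p) then show ?case using A by (simp add: me_pCons)
qed

lemma me_add: assumes A: "A \<in> carrier_mat n n"
  shows "mat_eval (p + q) A = mat_eval p A + mat_eval q A"
proof (induct p arbitrary: q rule: pCons_induct)
  case 0 then show ?case using A me_carrier[OF A] by (simp add: me_0)
next
  case (pCons a p)
  obtain b q' where q: "q = pCons b q'" by (cases q) auto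
  have c: "mat_eval p A \<in> carrier_mat n n" "mat_eval q' A \<in> carrier_mat n n" using me_carrier[OF A] by auto
  have "mat_eval (pCons a p + q) A = (a + b) \<cdot>\<^sub>m 1\<^sub>m n + A * (mat_eval p A + mat_eval q' A)"
    using pCons(2) q A by (simp add: me_pCons)
  also have "\<dots> = (a + b) \<cdot>\<^sub>m 1\<^sub>m n + (A * mat_eval p A + A * mat_eval q' A)"
    using mult_add_distrib_mat[OF A c] by simp
  also have "\<dots> = (a \<cdot>\<^sub>m 1\<^sub>m n + A * mat_eval p A) + (b \<cdot>\<^sub>m 1\<^sub>m n + A * mat_eval q' A)"
    using A c by (intro eq_matI) (auto simp: algebra_simps)
  finally show ?case using q A by (simp add: me_pCons)
qed

lemma me_smult: assumes A: "A \<in> carrier_mat n n"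
  shows "mat_eval (smult c p) A = c \<cdot>\<^sub>m mat_eval p A"
proof (induct p rule: pCons_induct)
  case 0 then show ?case using A by (auto simp: me_0)
next
  case (pCons a p)
  have cp: "mat_eval p A \<in> carrier_mat n n" using me_carrier[OF A] by auto
  have "mat_eval (smult c (pCons a p)) A = (c * a) \<cdot>\<^sub>m 1\<^sub>m n + A * (c \<cdot>\<^sub>m mat_eval p A)"
    using pCons A by (simp add: me_pCons)
  also have "\<dots> = (c * a) \<cdot>\<^sub>m 1\<^sub>m n + c \<cdot>\<^sub>m (A * mat_eval p A)"
    using mult_smult_distrib[OF A cp] by simp
  also have "\<dots> = c \<cdot>\<^sub>m (a \<cdot>\<^sub>m 1\<^sub>m n + A * mat_eval p A)"
    using A cp by (intro eq_matI) (auto simp: algebra_simps)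
  finally show ?case using A by (simp add: me_pCons)
qed

lemma me_mult: assumes A: "A \<in> carrier_mat n n"
  shows "mat_eval (p * q) A = mat_eval p A * mat_eval q A"
proof (induct p rule: pCons_induct)
  case 0
  have "0\<^sub>m n n * mat_eval q A = 0\<^sub>m n n" by (rule left_mult_zero_mat, rule me_carrier[OF A])
  then show ?case using A by (simp add: me_0)
next
  case (pCons a p)
  have cp: "mat_eval p A \<in> carrier_mat n n" "mat_eval q A \<in> carrier_mat n n" using me_carrier[OF A] by auto
  have "mat_eval (pCons a p * q) A = a \<cdot>\<^sub>m mat_eval q A + (0 \<cdot>\<^sub>m 1\<^sub>m n + A * (mat_eval p A * mat_eval q A))"
    using pCons A by (simp add: mult_pCons_left me_add me_smult me_pCons)
  also have "\<dots> = a \<cdot>\<^sub>m mat_eval q A + A * mat_eval p A * mat_eval q A"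
    using A cp by (intro eq_matI) auto
  also have "\<dots> = (a \<cdot>\<^sub>m 1\<^sub>m n) * mat_eval q A + A * mat_eval p A * mat_eval q A"
    using cp by (simp add: mult_smult_assoc_mat[of _ n n _ n] left_mult_one_mat)
  also have "\<dots> = (a \<cdot>\<^sub>m 1\<^sub>m n + A * mat_eval p A) * mat_eval q A"
    using A cp by (simp add: add_mult_distrib_mat[of _ n n _ _ n])
  finally show ?case using A by (simp add: me_pCons)
qed

lemma me_x: assumes A: "A \<in> carrier_mat n n" shows "mat_eval [:0, 1:] A = A"
proof -
  have "mat_eval [:1:] A = 1\<^sub>m n"
    using A by (simp add: me_pCons me_0 right_mult_zero_mat) (intro eq_matI, auto)
  then show ?thesis using A by (simp add: me_pCons) (intro eq_matI, auto)
qed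

lemma me_comm: assumes A: "A \<in> carrier_mat n n" shows "A * mat_eval p A = mat_eval p A * A"
proof -
  have "mat_eval ([:0, 1:] * p) A = mat_eval (p * [:0, 1:]) A" by (simp only: mult.commute)
  moreover have "mat_eval ([:0, 1:] * p) A = mat_eval [:0, 1:] A * mat_eval p A" by (rule me_mult[OF A])
  moreover have "mat_eval (p * [:0, 1:]) A = mat_eval p A * mat_eval [:0, 1:] A" by (rule me_mult[OF A])
  ultimately show ?thesis by (simp only: me_x[OF A])
qed

lemma me_pCons': assumes A: "A \<in> carrier_mat n n"
  shows "mat_eval (pCons a p) A = a \<cdot>\<^sub>m 1\<^sub>m n + mat_eval p A * A"
  using me_pCons[OF A] me_comm[OF A] by simp

lemma me_transpose: assumes A: "A \<in> carrier_mat n n"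
  shows "mat_eval p (transpose_mat A) = transpose_mat (mat_eval p A)"
proof (induct p rule: pCons_induct)
  case 0 then show ?case using A by (simp add: me_0)
next
  case (pCons a p)
  have At: "transpose_mat A \<in> carrier_mat n n" using A by simp
  have cp: "mat_eval p A \<in> carrier_mat n n" using me_carrier[OF A] by auto
  have "transpose_mat (mat_eval (pCons a p) A) = transpose_mat (a \<cdot>\<^sub>m 1\<^sub>m n) + transpose_mat (mat_eval p A * A)"
    using A cp by (simp add: me_pCons' transpose_add[of "a \<cdot>\<^sub>m 1\<^sub>m n" n n "mat_eval p A * A"])
  also have "\<dots> = a \<cdot>\<^sub>m 1\<^sub>m n + transpose_mat A * transpose_mat (mat_eval p A)"
    using A cp by (simp add: transpose_mult) (intro eq_matI, auto)
  finally show ?case using pCons At by (simp add: me_pCons)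
qed

lemma pow_comm: assumes A: "A \<in> carrier_mat n n" shows "A * A ^\<^sub>m k = A ^\<^sub>m k * A"
proof (induct k)
  case 0 then show ?case using A by simp
next
  case (Suc k)
  have "A * A ^\<^sub>m Suc k = (A * A ^\<^sub>m k) * A" using A by (simp add: assoc_mult_mat[of A n n "A ^\<^sub>m k" n A n])
  then show ?case using Suc by simp
qed

lemma pow_add: assumes A: "A \<in> carrier_mat n n" shows "A ^\<^sub>m (i + j) = A ^\<^sub>m i * A ^\<^sub>m j"
proof (induct j)
  case 0 then show ?case using A by simp
next
  case (Suc j) then show ?case using A by (simp add: assoc_mult_mat[of "A ^\<^sub>m i" n n "A ^\<^sub>m j" n A n])
qed

lemma pow_transpose: assumes A: "(A :: 'a :: comm_ring_1 mat) \<in> carrier_mat n n"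
  shows "transpose_mat A ^\<^sub>m k = transpose_mat (A ^\<^sub>m k)"
proof (induct k)
  case 0 then show ?case using A by simp
next
  case (Suc k)
  have "transpose_mat A ^\<^sub>m Suc k = transpose_mat (A ^\<^sub>m k) * transpose_mat A" using Suc by simp
  also have "\<dots> = transpose_mat (A * A ^\<^sub>m k)" using A by (simp add: transpose_mult[of A n n "A ^\<^sub>m k" n])
  finally show ?case using pow_comm[OF A] by simp
qed

lemma smult_one_mult_vec: assumes v: "(v :: 'a :: comm_ring_1 vec) \<in> carrier_vec n"
  shows "(a \<cdot>\<^sub>m 1\<^sub>m n) *\<^sub>v v = a \<cdot>\<^sub>v v"
proof -
  have r: "row (a \<cdot>\<^sub>m 1\<^sub>m n) i = a \<cdot>\<^sub>v unit_vec n i" if "i < n" for i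
    using that by (intro eq_vecI) (auto simp: unit_vec_def)
  show ?thesis using v by (intro eq_vecI) (auto simp: r)
qed

lemma me_entry: assumes A: "A \<in> carrier_mat n n"
  shows "v \<in> carrier_vec n \<Longrightarrow> (\<forall>j\<ge>N. coeff p j = 0) \<Longrightarrow> k < n \<Longrightarrow>
    (mat_eval p A *\<^sub>v v) $ k = (\<Sum>j<N. coeff p j * (A ^\<^sub>m j *\<^sub>v v) $ k)"
proof (induct p arbitrary: v N rule: pCons_induct)
  case 0 then show ?case using A by (simp add: me_0)
next
  case (pCons a p)
  have cp: "mat_eval p A \<in> carrier_mat n n" using me_carrier[OF A] by auto
  obtain N' where N: "N = Suc N'"
  proof (cases N)
    case 0
    then have "a = 0" "\<forall>j. coeff p j = 0" using pCons(4)
      by (metis coeff_pCons_0 le0, metis coeff_pCons_Suc le0)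
    then show ?thesis using pCons(1) by (simp add: poly_eq_iff)
  qed
  have c': "\<forall>j\<ge>N'. coeff p j = 0" using pCons(4) N by (metis Suc_le_mono coeff_pCons_Suc)
  have Av: "A *\<^sub>v v \<in> carrier_vec n" using A pCons(3) by simp
  have "(mat_eval (pCons a p) A *\<^sub>v v) $ k = ((a \<cdot>\<^sub>m 1\<^sub>m n) *\<^sub>v v + (mat_eval p A * A) *\<^sub>v v) $ k"
    using A cp pCons(3) by (simp add: me_pCons' add_mult_distrib_mat_vec[of _ n n])
  also have "\<dots> = a * v $ k + (mat_eval p A *\<^sub>v (A *\<^sub>v v)) $ k"
    using A cp pCons(3) pCons(5) by (simp add: smult_one_mult_vec)
  also have "\<dots> = a * v $ k + (\<Sum>j<N'. coeff p j * (A ^\<^sub>m j *\<^sub>v (A *\<^sub>v v)) $ k)"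
    using pCons(2)[OF Av c' pCons(5)] by simp
  also have "\<dots> = (\<Sum>j<N. coeff (pCons a p) j * (A ^\<^sub>m j *\<^sub>v v) $ k)"
    unfolding N sum.lessThan_Suc_shift using A pCons(3)
    by (simp del: pow_mat.simps add: pow_mat.simps(1) pow_mat.simps(2)[of A] assoc_mult_mat_vec[of _ n n _ n])
  finally show ?case .
qed

definition kry :: "'a::field mat \<Rightarrow> 'a vec \<Rightarrow> 'a mat" where
  "kry A v = mat (dim_row A) (dim_row A) (\<lambda>(i,j). (A ^\<^sub>m j *\<^sub>v v) $ i)"

lemma kry_carrier: "A \<in> carrier_mat n n \<Longrightarrow> kry A v \<in> carrier_mat n n"
  unfolding kry_def by auto

lemma kry_dim[simp]: "dim_row (kry A v) = dim_row A" "dim_col (kry A v) = dim_row A"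
  unfolding kry_def by auto

lemma kry_mult_vec_index: assumes A: "A \<in> carrier_mat n n" and k: "k < n"
  shows "(kry A v *\<^sub>v vec n c) $ k = (\<Sum>j<n. c j * (A ^\<^sub>m j *\<^sub>v v) $ k)"
  using A k unfolding kry_def by (auto simp: scalar_prod_def lessThan_atLeast0 mult.commute intro!: sum.cong)

lemma me_kry: assumes A: "A \<in> carrier_mat n n" and v: "v \<in> carrier_vec n"
  and p: "\<forall>j\<ge>n. coeff p j = 0"
  shows "mat_eval p A *\<^sub>v v = kry A v *\<^sub>v vec n (coeff p)"
proof (rule eq_vecI)
  fix k assume "k < dim_vec (kry A v *\<^sub>v vec n (coeff p))"
  then have k: "k < n" using A by simp
  show "(mat_eval p A *\<^sub>v v) $ k = (kry A v *\<^sub>v vec n (coeff p)) $ k"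
    by (simp only: kry_mult_vec_index[OF A k] me_entry[OF A v p k])
next
  show "dim_vec (mat_eval p A *\<^sub>v v) = dim_vec (kry A v *\<^sub>v vec n (coeff p))"
    using me_carrier[OF A, of p] A by simp
qed

lemma finsum_kry: assumes A: "A \<in> carrier_mat n n" and v: "v \<in> carrier_vec n"
  shows "finsum_vec TYPE('a::field) n (\<lambda>i. c i \<cdot>\<^sub>v (A ^\<^sub>m i *\<^sub>v v)) {..<n} = kry A v *\<^sub>v vec n c"
proof -
  have P: "A ^\<^sub>m x *\<^sub>v v \<in> carrier_vec n" for x using A v by (metis mult_mat_vec_carrier pow_carrier_mat)
  have F: "(\<lambda>i. c i \<cdot>\<^sub>v (A ^\<^sub>m i *\<^sub>v v)) \<in> {..<n} \<rightarrow> carrier_vec n" using P by auto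
  show ?thesis
  proof (rule eq_vecI)
    fix k assume "k < dim_vec (kry A v *\<^sub>v vec n c)"
    then have k: "k < n" using A by simp
    show "finsum_vec TYPE('a) n (\<lambda>i. c i \<cdot>\<^sub>v (A ^\<^sub>m i *\<^sub>v v)) {..<n} $ k = (kry A v *\<^sub>v vec n c) $ k"
      unfolding kry_mult_vec_index[OF A k] index_finsum_vec[OF _ k F, simplified]
      using k A by (intro sum.cong refl) (simp add: carrier_vecD[OF P])
  next
    show "dim_vec (finsum_vec TYPE('a) n (\<lambda>i. c i \<cdot>\<^sub>v (A ^\<^sub>m i *\<^sub>v v)) {..<n}) = dim_vec (kry A v *\<^sub>v vec n c)"
      using finsum_vec_closed[OF F] A by simp
  qed
qed


section \<open>Cyclic vectors and Krylov matrices\<close>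

lemma col_kry: assumes A: "A \<in> carrier_mat n n" and v: "v \<in> carrier_vec n" and j: "j < n"
  shows "col (kry A v) j = A ^\<^sub>m j *\<^sub>v v"
  using A v j unfolding kry_def by (intro eq_vecI) auto

lemma Kvec_pow: assumes K: "subfield K" and A: "A \<in> carrier_mat n n" "K_mat K A"
  and v: "v \<in> carrier_vec n" "Kvec K v"
  shows "Kvec K (A ^\<^sub>m j *\<^sub>v v)"
  using Kvec_mult[OF K K_mat_pow[OF K A(2)] v(2)] A v by simp

lemma K_mat_kry: assumes K: "subfield K" and A: "A \<in> carrier_mat n n" "K_mat K A"
  and v: "v \<in> carrier_vec n" "Kvec K v"
  shows "K_mat K (kry A v)"
  using Kvec_pow[OF K A v] A v unfolding K_mat_def Kvec_def kry_def by auto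

lemma cyc_basic: assumes A: "A \<in> carrier_mat n n" and cv: "cyclic_vector K A v"
  shows "v \<in> carrier_vec n" "Kvec K v"
    "\<And>c. (\<forall>i<n. c i \<in> K) \<Longrightarrow> kry A v *\<^sub>v vec n c = 0\<^sub>v n \<Longrightarrow> \<forall>i<n. c i = 0"
    "\<And>w. w \<in> K_vecs K n \<Longrightarrow> \<exists>c. (\<forall>i<n. c i \<in> K) \<and> w = kry A v *\<^sub>v vec n c"
proof -
  have dA: "dim_row A = n" using A by simp
  have vK: "v \<in> K_vecs K n" using cv unfolding cyclic_vector_def Let_def dA by auto
  then show v: "v \<in> carrier_vec n" "Kvec K v" by (auto simp: K_vecs_iff)
  show "\<And>c. (\<forall>i<n. c i \<in> K) \<Longrightarrow> kry A v *\<^sub>v vec n c = 0\<^sub>v n \<Longrightarrow> \<forall>i<n. c i = 0"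
    using cv unfolding cyclic_vector_def Let_def dA finsum_kry[OF A v(1)] by blast
  show "\<And>w. w \<in> K_vecs K n \<Longrightarrow> \<exists>c. (\<forall>i<n. c i \<in> K) \<and> w = kry A v *\<^sub>v vec n c"
    using cv unfolding cyclic_vector_def Let_def dA finsum_kry[OF A v(1)] by blast
qed

lemma cyc_inv: assumes K: "subfield K" and A: "A \<in> carrier_mat n n" and cv: "cyclic_vector K A v"
  shows "\<exists>D. D \<in> carrier_mat n n \<and> K_mat K D \<and> kry A v * D = 1\<^sub>m n \<and> D * kry A v = 1\<^sub>m n"
proof -
  note cb = cyc_basic[OF A cv]
  have uK: "unit_vec n k \<in> K_vecs K n" for k
    unfolding K_vecs_def using sK0[OF K] sK1[OF K] by (auto simp: unit_vec_def)
  define cf where "cf k = (SOME c. (\<forall>i<n. c i \<in> K) \<and> unit_vec n k = kry A v *\<^sub>v vec n c)" for k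
  have cf: "(\<forall>i<n. cf k i \<in> K) \<and> unit_vec n k = kry A v *\<^sub>v vec n (cf k)" for k
    using someI_ex[OF cb(4)[OF uK]] unfolding cf_def by blast
  define D where "D = mat n n (\<lambda>(j,k). cf k j)"
  have Dc: "D \<in> carrier_mat n n" unfolding D_def by simp
  have colD: "col D k = vec n (cf k)" if "k < n" for k
    using that unfolding D_def by (intro eq_vecI) auto
  have VD: "kry A v * D = 1\<^sub>m n"
  proof (rule eq_matI)
    fix i j assume ij: "i < dim_row (1\<^sub>m n)" "j < dim_col (1\<^sub>m n)"
    then have i: "i < n" and j: "j < n" by auto
    have "(kry A v * D) $$ (i, j) = row (kry A v) i \<bullet> col D j"
      using i j A Dc by simp
    also have "\<dots> = (kry A v *\<^sub>v vec n (cf j)) $ i" using i A by (simp add: colD[OF j])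
    also have "\<dots> = unit_vec n j $ i" using cf[of j] by simp
    also have "\<dots> = 1\<^sub>m n $$ (i, j)" using i j by simp
    finally show "(kry A v * D) $$ (i, j) = 1\<^sub>m n $$ (i, j)" .
  qed (use A Dc in auto)
  have DV: "D * kry A v = 1\<^sub>m n"
    by (rule mat_mult_left_right_inverse[OF kry_carrier[OF A] Dc VD])
  have KD: "K_mat K D" unfolding K_mat_def D_def using cf by auto
  show ?thesis using Dc KD VD DV by blast
qed


lemma pow_vec_carrier[simp]: "A \<in> carrier_mat n n \<Longrightarrow> v \<in> carrier_vec n \<Longrightarrow> A ^\<^sub>m k *\<^sub>v v \<in> carrier_vec n"
  by (metis mult_mat_vec_carrier pow_carrier_mat)

lemma mat_vec_zero[simp]: "A \<in> carrier_mat nr n \<Longrightarrow> A *\<^sub>v 0\<^sub>v n = 0\<^sub>v nr"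
  by (intro eq_vecI) auto

lemma zero_mat_vec[simp]: "(v :: 'a :: semiring_0 vec) \<in> carrier_vec n \<Longrightarrow> 0\<^sub>m nr n *\<^sub>v v = 0\<^sub>v nr"
  by (intro eq_vecI) auto

lemma comm_pow_mat: assumes A: "A \<in> carrier_mat n n" and B: "B \<in> carrier_mat n n" and AB: "A * B = B * A"
  shows "A ^\<^sub>m j * B = B * A ^\<^sub>m j"
proof (induct j)
  case 0 then show ?case using A B by simp
next
  case (Suc j)
  have Aj: "A ^\<^sub>m j \<in> carrier_mat n n" using A by simp
  have "A ^\<^sub>m Suc j * B = A ^\<^sub>m j * (A * B)" using A B Aj by (simp add: assoc_mult_mat[of "A ^\<^sub>m j" n n A n B n])
  also have "\<dots> = A ^\<^sub>m j * (B * A)" using AB by simp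
  also have "\<dots> = (A ^\<^sub>m j * B) * A" using A B Aj by (simp add: assoc_mult_mat[of "A ^\<^sub>m j" n n B n A n])
  also have "\<dots> = (B * A ^\<^sub>m j) * A" using Suc by simp
  also have "\<dots> = B * A ^\<^sub>m Suc j" using A B Aj by (simp add: assoc_mult_mat[of B n n "A ^\<^sub>m j" n A n])
  finally show ?case .
qed

lemma coeff_sum_monom: "coeff (\<Sum>j<n. monom (c j) j) i = (if i < n then c i else 0)"
  by (simp add: coeff_sum coeff_monom)




locale cycsetup =
  fixes K :: "'a::field set" and M :: "'a mat" and v :: "'a vec" and D :: "'a mat" and n :: nat and f :: "'a poly"
  assumes K: "subfield K" and M: "M \<in> carrier_mat n n" and KM: "K_mat K M" and cv: "cyclic_vector K M v"
  and Dc: "D \<in> carrier_mat n n" and KD: "K_mat K D" and VD: "kry M v * D = 1\<^sub>m n" and DV: "D * kry M v = 1\<^sub>m n"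
  and mp: "is_min_poly K M f"
begin

lemma v: "v \<in> carrier_vec n" "Kvec K v" using cyc_basic[OF M cv] by auto
lemma Vc: "kry M v \<in> carrier_mat n n" using kry_carrier[OF M] .
lemma fM: "mat_eval f M = 0\<^sub>m n n" using mp M unfolding is_min_poly_def by auto
lemma f0: "f \<noteq> 0" using mp unfolding is_min_poly_def by auto

lemma V_inj: assumes a: "a \<in> carrier_vec n" and z: "kry M v *\<^sub>v a = 0\<^sub>v n" shows "a = 0\<^sub>v n"
proof -
  have "a = (D * kry M v) *\<^sub>v a" using DV a by simp
  also have "\<dots> = D *\<^sub>v (kry M v *\<^sub>v a)" using Dc Vc a by simp
  also have "\<dots> = 0\<^sub>v n" using z Dc by simp
  finally show ?thesis .
qed

lemma deg_ge: "n \<le> degree f"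
proof (rule ccontr)
  assume "\<not> n \<le> degree f"
  then have lt: "degree f < n" by simp
  have cz: "\<forall>j\<ge>n. coeff f j = 0" using lt by (auto intro: coeff_eq_0)
  have "kry M v *\<^sub>v vec n (coeff f) = mat_eval f M *\<^sub>v v" by (rule me_kry[OF M v(1) cz, symmetric])
  also have "\<dots> = 0\<^sub>v n" unfolding fM by (rule zero_mat_vec[OF v(1)])
  finally have "vec n (coeff f) = 0\<^sub>v n" by (rule V_inj[rotated]) simp
  then have "vec n (coeff f) $ degree f = 0" using lt by simp
  then have "lead_coeff f = 0" using lt by simp
  then show False using mp unfolding is_min_poly_def by simp
qed

lemma deg_le: "degree f \<le> n"
proof -
  have "M ^\<^sub>m n *\<^sub>v v \<in> K_vecs K n" using Kvec_pow[OF K M KM v] M v by (simp add: K_vecs_iff)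
  then obtain c where c: "\<forall>i<n. c i \<in> K" "M ^\<^sub>m n *\<^sub>v v = kry M v *\<^sub>v vec n c"
    using cyc_basic(4)[OF M cv] by blast
  define q where "q = monom 1 n - (\<Sum>j<n. monom (c j) j)"
  have cq: "coeff q i = (if i = n then 1 else 0) - (if i < n then c i else 0)" for i
    unfolding q_def by (simp add: coeff_sum_monom coeff_monom)
  have qK: "\<forall>i. coeff q i \<in> K"
    using c sK_minus[OF K] sK0[OF K] sK1[OF K] by (auto simp: cq)
  have q0: "q \<noteq> 0" using cq[of n] by auto
  have dq: "degree q \<le> n" by (rule degree_le) (auto simp: cq)
  have qc: "mat_eval q M \<in> carrier_mat n n" by (rule me_carrier[OF M])
  have qv: "mat_eval q M *\<^sub>v v = 0\<^sub>v n"
  proof (rule eq_vecI)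
    fix k assume "k < dim_vec (0\<^sub>v n :: 'a vec)"
    then have k: "k < n" by simp
    have "(mat_eval q M *\<^sub>v v) $ k = (\<Sum>j<Suc n. coeff q j * (M ^\<^sub>m j *\<^sub>v v) $ k)"
      by (rule me_entry[OF M v(1) _ k]) (auto simp: cq)
    also have "\<dots> = (M ^\<^sub>m n *\<^sub>v v) $ k - (\<Sum>j<n. c j * (M ^\<^sub>m j *\<^sub>v v) $ k)"
      by (simp add: cq sum_negf)
    also have "\<dots> = 0" using c(2) kry_mult_vec_index[OF M k, of v c] by simp
    finally show "(mat_eval q M *\<^sub>v v) $ k = 0\<^sub>v n $ k" using k by simp
  qed (use qc in simp)
  have qV: "mat_eval q M * kry M v = 0\<^sub>m n n"
  proof (rule eq_matI)
    fix i j assume "i < dim_row (0\<^sub>m n n :: 'a mat)" "j < dim_col (0\<^sub>m n n :: 'a mat)"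
    then have i: "i < n" and j: "j < n" by auto
    have Mj: "M ^\<^sub>m j \<in> carrier_mat n n" using M by simp
    have cm: "mat_eval q M * M = M * mat_eval q M" using me_comm[OF M] by simp
    have "(mat_eval q M * kry M v) $$ (i, j) = row (mat_eval q M) i \<bullet> col (kry M v) j"
      by (rule index_mult_mat) (use i j qc M in auto)
    also have "\<dots> = (mat_eval q M *\<^sub>v (M ^\<^sub>m j *\<^sub>v v)) $ i"
      using i qc by (simp add: col_kry[OF M v(1) j])
    also have "\<dots> = ((mat_eval q M * M ^\<^sub>m j) *\<^sub>v v) $ i" using qc Mj v by simp
    also have "\<dots> = ((M ^\<^sub>m j * mat_eval q M) *\<^sub>v v) $ i"
      using comm_pow_mat[OF M qc, of j] cm by simp
    also have "\<dots> = (M ^\<^sub>m j *\<^sub>v (mat_eval q M *\<^sub>v v)) $ i" using qc Mj v by simp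
    also have "\<dots> = 0" using qv i Mj by simp
    finally show "(mat_eval q M * kry M v) $$ (i, j) = 0\<^sub>m n n $$ (i, j)" using i j by simp
  qed (use qc Vc in auto)
  have "mat_eval q M = mat_eval q M * (kry M v * D)" by (simp only: VD right_mult_one_mat[OF qc])
  also have "\<dots> = (mat_eval q M * kry M v) * D" by (rule assoc_mult_mat[symmetric, OF qc Vc Dc])
  also have "\<dots> = 0\<^sub>m n n" by (simp only: qV left_mult_zero_mat[OF Dc])
  finally have "mat_eval q M = 0\<^sub>m n n" .
  then have "degree f \<le> degree q" using mp q0 qK M unfolding is_min_poly_def by auto
  then show ?thesis using dq by simp
qed

lemma deg: "degree f = n" using deg_le deg_ge by simp

definition w where "w = row D (n - 1)"

lemma w: "w \<in> carrier_vec n" "Kvec K w"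
proof -
  show "w \<in> carrier_vec n" unfolding w_def by (rule carrier_vecI) (use Dc in simp)
  show "Kvec K w"
  proof (cases "n = 0")
    case True then show ?thesis unfolding w_def Kvec_def using Dc by auto
  next
    case False show ?thesis unfolding w_def by (rule Kvec_row[OF KD]) (use Dc False in simp)
  qed
qed

lemma psi_low: assumes n: "0 < n" and S: "\<forall>j\<ge>n. coeff S j = 0"
  shows "w \<bullet> (mat_eval S M *\<^sub>v v) = coeff S (n - 1)"
proof -
  have a: "vec n (coeff S) \<in> carrier_vec n" by simp
  have "w \<bullet> (mat_eval S M *\<^sub>v v) = w \<bullet> (kry M v *\<^sub>v vec n (coeff S))"
    by (simp only: me_kry[OF M v(1) S])
  also have "\<dots> = (D *\<^sub>v (kry M v *\<^sub>v vec n (coeff S))) $ (n - 1)"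
    unfolding w_def using n Dc by simp
  also have "\<dots> = ((D * kry M v) *\<^sub>v vec n (coeff S)) $ (n - 1)"
    using Dc Vc a by simp
  also have "\<dots> = coeff S (n - 1)" using n by (simp add: DV)
  finally show ?thesis .
qed

lemma psi_mod: "w \<bullet> (mat_eval S M *\<^sub>v v) = w \<bullet> (mat_eval (S mod f) M *\<^sub>v v)"
proof -
  have "mat_eval S M = mat_eval (S div f * f + S mod f) M" by simp
  also have "\<dots> = mat_eval (S div f) M * mat_eval f M + mat_eval (S mod f) M"
    by (simp only: me_add[OF M] me_mult[OF M])
  also have "\<dots> = mat_eval (S mod f) M"
    using me_carrier[OF M] by (simp add: fM right_mult_zero_mat[OF me_carrier[OF M]])
  finally show ?thesis by simp
qed

lemma psi: assumes n: "0 < n" shows "w \<bullet> (mat_eval S M *\<^sub>v v) = coeff (S mod f) (n - 1)"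
proof -
  have z: "\<forall>j\<ge>n. coeff (S mod f) j = 0"
  proof (cases "S mod f = 0")
    case False
    have "degree (S mod f) < n" using degree_mod_less'[OF f0 False] unfolding deg .
    then show ?thesis by (meson coeff_eq_0 order.strict_trans2)
  qed simp
  have "w \<bullet> (mat_eval S M *\<^sub>v v) = w \<bullet> (mat_eval (S mod f) M *\<^sub>v v)" by (rule psi_mod)
  also have "\<dots> = coeff (S mod f) (n - 1)" by (rule psi_low[OF n z])
  finally show ?thesis .
qed

lemma psi_dvd: assumes Z: "\<And>Q. w \<bullet> (mat_eval (S * Q) M *\<^sub>v v) = 0" shows "f dvd S"
proof (rule ccontr)
  assume nd: "\<not> f dvd S"
  define r where "r = S mod f"
  have r0: "r \<noteq> 0" using nd unfolding r_def by (simp add: mod_eq_0_iff_dvd)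
  have dr: "degree r < n" using degree_mod_less'[OF f0 r0[unfolded r_def]] unfolding deg r_def .
  then have n: "0 < n" by simp
  define k where "k = n - 1 - degree r"
  define Q where "Q = monom (1::'a) k"
  have dQ: "degree (r * Q) < degree f"
  proof -
    have "degree (r * Q) \<le> degree r + degree Q" by (rule degree_mult_le)
    also have "degree Q = k" unfolding Q_def by (simp add: degree_monom_eq)
    finally have "degree (r * Q) \<le> degree r + k" .
    then show ?thesis unfolding deg using dr unfolding k_def by arith
  qed
  have "(S * Q) mod f = (r * Q) mod f" unfolding r_def by (simp add: mod_mult_left_eq)
  also have "\<dots> = r * Q" by (rule mod_poly_less[OF dQ])
  finally have m: "(S * Q) mod f = r * Q" .
  have e: "n - 1 = degree r + k" unfolding k_def using dr by arith
  have "coeff (r * Q) (n - 1) = coeff (r * Q) (degree r + k)" unfolding e ..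
  also have "\<dots> = lead_coeff r" unfolding Q_def by (simp add: mult.commute[of r] coeff_monom_mult)
  finally have "coeff (r * Q) (n - 1) \<noteq> 0" using r0 by simp
  then show False using Z[of Q] psi[OF n, of "S * Q"] m by simp
qed

lemma psi_pow: assumes j: "j < n" shows "w \<bullet> (M ^\<^sub>m j *\<^sub>v v) = (if j = n - 1 then 1 else 0)"
proof -
  have n: "n - 1 < n" using j by simp
  have "w \<bullet> (M ^\<^sub>m j *\<^sub>v v) = row D (n - 1) \<bullet> col (kry M v) j"
    unfolding w_def col_kry[OF M v(1) j] ..
  also have "\<dots> = (D * kry M v) $$ (n - 1, j)" by (rule index_mult_mat(1)[symmetric]) (use n j Dc Vc in auto)
  also have "\<dots> = (if j = n - 1 then 1 else 0)" using n j by (simp add: DV)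
  finally show ?thesis .
qed


lemma me_vec_mult: "mat_eval p M *\<^sub>v (mat_eval q M *\<^sub>v x) = mat_eval (p * q) M *\<^sub>v x" if x: "x \<in> carrier_vec n" for p q x
proof -
  have "mat_eval p M *\<^sub>v (mat_eval q M *\<^sub>v x) = (mat_eval p M * mat_eval q M) *\<^sub>v x"
    by (rule assoc_mult_mat_vec[symmetric, OF me_carrier[OF M] me_carrier[OF M] x])
  then show ?thesis by (simp only: me_mult[OF M])
qed

lemma MT: "transpose_mat M \<in> carrier_mat n n" using M by simp

lemma meT_scalar: assumes x: "x \<in> carrier_vec n"
  shows "(mat_eval P (transpose_mat M) *\<^sub>v w) \<bullet> x = w \<bullet> (mat_eval P M *\<^sub>v x)"
  unfolding me_transpose[OF M] by (rule transpose_vec_mult_scalar[OF me_carrier[OF M] x w(1)])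

lemma meT_vec_mult: "mat_eval p (transpose_mat M) *\<^sub>v (mat_eval q (transpose_mat M) *\<^sub>v x) = mat_eval (p * q) (transpose_mat M) *\<^sub>v x" if x: "x \<in> carrier_vec n" for p q x
proof -
  have "mat_eval p (transpose_mat M) *\<^sub>v (mat_eval q (transpose_mat M) *\<^sub>v x) = (mat_eval p (transpose_mat M) * mat_eval q (transpose_mat M)) *\<^sub>v x"
    by (rule assoc_mult_mat_vec[symmetric, OF me_carrier[OF MT] me_carrier[OF MT] x])
  then show ?thesis by (simp only: me_mult[OF MT])
qed

definition W where "W = kry (transpose_mat M) w"

lemma Wc: "W \<in> carrier_mat n n" unfolding W_def by (rule kry_carrier[OF MT])
lemma KW: "K_mat K W" unfolding W_def
  by (rule K_mat_kry[OF K MT K_mat_transpose[OF KM] w])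

lemma detW: "det W \<noteq> 0"
proof -
  define V' where "V' = mat n n (\<lambda>(i,j). (M ^\<^sub>m (n - 1 - j) *\<^sub>v v) $ i)"
  have V'c: "V' \<in> carrier_mat n n" unfolding V'_def by simp
  have colV': "col V' j = M ^\<^sub>m (n - 1 - j) *\<^sub>v v" if j: "j < n" for j
    unfolding V'_def using j M v(1) by (intro eq_vecI) auto
  define G where "G = transpose_mat W * V'"
  have Gc: "G \<in> carrier_mat n n" unfolding G_def using Wc V'c by simp
  have Gij: "G $$ (i, j) = w \<bullet> (M ^\<^sub>m (i + (n - 1 - j)) *\<^sub>v v)" if i: "i < n" and j: "j < n" for i j
  proof -
    have Mi: "M ^\<^sub>m i \<in> carrier_mat n n" "M ^\<^sub>m (n - 1 - j) \<in> carrier_mat n n" using M by auto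
    have y: "M ^\<^sub>m (n - 1 - j) *\<^sub>v v \<in> carrier_vec n" using M v(1) by simp
    have "G $$ (i, j) = row (transpose_mat W) i \<bullet> col V' j"
      unfolding G_def by (rule index_mult_mat(1)) (use i j Wc V'c in auto)
    also have "\<dots> = col W i \<bullet> col V' j" using i Wc by simp
    also have "\<dots> = (transpose_mat M ^\<^sub>m i *\<^sub>v w) \<bullet> (M ^\<^sub>m (n - 1 - j) *\<^sub>v v)"
      unfolding W_def col_kry[OF MT w(1) i] colV'[OF j] ..
    also have "\<dots> = (transpose_mat (M ^\<^sub>m i) *\<^sub>v w) \<bullet> (M ^\<^sub>m (n - 1 - j) *\<^sub>v v)"
      unfolding pow_transpose[OF M] ..
    also have "\<dots> = w \<bullet> (M ^\<^sub>m i *\<^sub>v (M ^\<^sub>m (n - 1 - j) *\<^sub>v v))"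
      by (rule transpose_vec_mult_scalar[OF Mi(1) y w(1)])
    also have "\<dots> = w \<bullet> ((M ^\<^sub>m i * M ^\<^sub>m (n - 1 - j)) *\<^sub>v v)"
      using Mi v(1) by simp
    also have "\<dots> = w \<bullet> (M ^\<^sub>m (i + (n - 1 - j)) *\<^sub>v v)"
      unfolding pow_add[OF M] ..
    finally show ?thesis .
  qed
  have lower: "G $$ (i, j) = 0" if "i < j" "j < n" for i j
  proof -
    have "i + (n - 1 - j) < n" "i + (n - 1 - j) \<noteq> n - 1" using that by arith+
    then show ?thesis using Gij[of i j] that psi_pow[of "i + (n - 1 - j)"] by simp
  qed
  have diag: "G $$ (i, i) = 1" if "i < n" for i
  proof -
    have "i + (n - 1 - i) = n - 1" "n - 1 < n" using that by arith+
    then show ?thesis using Gij[of i i] that psi_pow[of "n - 1"] by simp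
  qed
  have "det G = prod_list (diag_mat G)" by (rule det_lower_triangular[OF lower Gc])
  also have "\<dots> = (\<Prod>i = 0..<n. G $$ (i, i))" unfolding prod_list_diag_prod using Gc by simp
  also have "\<dots> = 1" using diag by simp
  finally have "det G = 1" .
  moreover have "det G = det W * det V'"
    unfolding G_def det_mult[OF transpose_carrier_mat[THEN iffD2, OF Wc] V'c] det_transpose[OF Wc] ..
  ultimately show ?thesis by auto
qed

lemma Winv: obtains Wi where "Wi \<in> carrier_mat n n" "K_mat K Wi" "W * Wi = 1\<^sub>m n" "Wi * W = 1\<^sub>m n"
proof -
  define Wi where "Wi = inverse (det W) \<cdot>\<^sub>m adj_mat W"
  note ad = adj_mat[OF Wc]
  have Wic: "Wi \<in> carrier_mat n n" unfolding Wi_def using ad by simp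
  have "W * Wi = inverse (det W) \<cdot>\<^sub>m (W * adj_mat W)" unfolding Wi_def
    by (rule mult_smult_distrib[OF Wc ad(1)])
  also have "\<dots> = 1\<^sub>m n" unfolding ad(2) using detW by (intro eq_matI) auto
  finally have WW: "W * Wi = 1\<^sub>m n" .
  have KWi: "K_mat K Wi" unfolding Wi_def
    by (rule K_mat_smult[OF K sK_inverse[OF K K_det[OF K KW]] K_adj[OF K KW]])
  show ?thesis using that[OF Wic KWi WW mat_mult_left_right_inverse[OF Wc Wic WW]] .
qed

lemma cvT: "cyclic_vector K (transpose_mat M) w"
proof -
  obtain Wi where Wi: "Wi \<in> carrier_mat n n" "K_mat K Wi" "W * Wi = 1\<^sub>m n" "Wi * W = 1\<^sub>m n"
    using Winv by blast
  have d: "dim_row (transpose_mat M) = n" using M by simp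
  have wK: "w \<in> K_vecs K n" using w by (simp add: K_vecs_iff)
  have ind: "\<forall>i<n. c i = 0" if "W *\<^sub>v vec n c = 0\<^sub>v n" for c
  proof -
    have "vec n c = (Wi * W) *\<^sub>v vec n c" using Wi(4) by simp
    also have "\<dots> = Wi *\<^sub>v (W *\<^sub>v vec n c)" using Wi(1) Wc by simp
    also have "\<dots> = 0\<^sub>v n" unfolding that using Wi(1) by simp
    finally have "vec n c = 0\<^sub>v n" .
    then show ?thesis by (metis index_vec index_zero_vec(1))
  qed
  have span: "\<exists>c. (\<forall>i<n. c i \<in> K) \<and> y = W *\<^sub>v vec n c" if y: "y \<in> K_vecs K n" for y
  proof -
    have yc: "y \<in> carrier_vec n" "Kvec K y" using y by (auto simp: K_vecs_iff)
    define a where "a = Wi *\<^sub>v y"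
    have ac: "a \<in> carrier_vec n" unfolding a_def using Wi(1) yc by simp
    have aK: "Kvec K a" unfolding a_def by (rule Kvec_mult[OF K Wi(2) yc(2)]) (use Wi(1) yc in simp)
    have va: "vec n (\<lambda>i. a $ i) = a" using ac by (intro eq_vecI) auto
    have "W *\<^sub>v vec n (\<lambda>i. a $ i) = W *\<^sub>v a" by (simp only: va)
    also have "\<dots> = (W * Wi) *\<^sub>v y" unfolding a_def using Wi(1) Wc yc by simp
    also have "\<dots> = y" using Wi(3) yc by simp
    finally show ?thesis using aK ac unfolding Kvec_def by (intro exI[of _ "\<lambda>i. a $ i"]) auto
  qed
  show ?thesis unfolding cyclic_vector_def Let_def d finsum_kry[OF MT w(1)] W_def[symmetric]
    using wK ind span by blast
qed

lemma reprT: assumes y: "y \<in> carrier_vec n" shows "\<exists>P. y = mat_eval P (transpose_mat M) *\<^sub>v w"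
proof -
  obtain Wi where Wi: "Wi \<in> carrier_mat n n" "K_mat K Wi" "W * Wi = 1\<^sub>m n" "Wi * W = 1\<^sub>m n"
    using Winv by blast
  define a where "a = Wi *\<^sub>v y"
  have ac: "a \<in> carrier_vec n" unfolding a_def using Wi(1) y by simp
  define P where "P = (\<Sum>j<n. monom (a $ j) j)"
  have cP: "\<forall>j\<ge>n. coeff P j = 0" unfolding P_def coeff_sum_monom by simp
  have vP: "vec n (coeff P) = a" unfolding P_def coeff_sum_monom using ac by (intro eq_vecI) auto
  have "mat_eval P (transpose_mat M) *\<^sub>v w = W *\<^sub>v a"
    unfolding me_kry[OF MT w(1) cP] vP W_def ..
  also have "\<dots> = (W * Wi) *\<^sub>v y" unfolding a_def using Wi(1) Wc y by simp
  also have "\<dots> = y" using Wi(3) y by simp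
  finally show ?thesis by metis
qed

end

theorem proposition4:
  fixes K :: "'a::field set" and M :: "'a mat" and f g h :: "'a poly"
    and C :: "'a vec set" and n m :: nat
  assumes "subfield K" and "ext_degree K m" and "m \<ge> n"
    and "M \<in> carrier_mat n n" and "K_mat K M"
    and "cyclic_mat K M" and "is_min_poly K M f"
    and "cyclic_code M C" and "is_gen_poly K M f C g"
    and "f = g * h"
  shows "cyclic_mat K (transpose_mat M) \<and> is_min_poly K (transpose_mat M) f \<and>
         cyclic_code (transpose_mat M) (dual_code n C) \<and>
         is_gen_poly K (transpose_mat M) f (dual_code n C) h"
proof -
  note K = assms(1) and M = assms(4) and KM = assms(5) and mp = assms(7) and cc = assms(8)
    and fgh = assms(10)
  obtain v where cv: "cyclic_vector K M v" and Cdef: "C = code_of M v g" and lg: "lead_coeff g = 1"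
    using assms(9) unfolding is_gen_poly_def by blast
  obtain D where D: "D \<in> carrier_mat n n" "K_mat K D" "kry M v * D = 1\<^sub>m n" "D * kry M v = 1\<^sub>m n"
    using cyc_inv[OF K M cv] by blast
  interpret cs: cycsetup K M v D n f
    using K M KM cv D mp by unfold_locales
  have dM: "dim_row M = n" "dim_row (transpose_mat M) = n" using M by auto
  have Cc: "C \<subseteq> carrier_vec n" and MC: "\<And>c. c \<in> C \<Longrightarrow> M *\<^sub>v c \<in> C"
    using cc unfolding cyclic_code_def dM by auto
  have Cform: "C = {mat_eval Q M *\<^sub>v (mat_eval g M *\<^sub>v v) | Q. True}"
    unfolding Cdef code_of_def ..
  have vc: "v \<in> carrier_vec n" by (rule cs.v(1))
  have gvc: "mat_eval g M *\<^sub>v v \<in> carrier_vec n" by (rule mult_mat_vec_carrier[OF me_carrier[OF M] vc])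
  have g0: "g \<noteq> 0" using lg by auto
  have A1: "cyclic_mat K (transpose_mat M)" unfolding cyclic_mat_def using cs.cvT by blast
  have A2: "is_min_poly K (transpose_mat M) f"
  proof -
    have "mat_eval f (transpose_mat M) = 0\<^sub>m n n"
      unfolding me_transpose[OF M] cs.fM by simp
    moreover have "degree f \<le> degree q"
      if "q \<noteq> 0" "\<forall>i. coeff q i \<in> K" "mat_eval q (transpose_mat M) = 0\<^sub>m n n" for q
    proof -
      have "transpose_mat (mat_eval q M) = 0\<^sub>m n n" using that(3) unfolding me_transpose[OF M] .
      then have "transpose_mat (transpose_mat (mat_eval q M)) = 0\<^sub>m n n" by simp
      then have "mat_eval q M = 0\<^sub>m n n" by simp
      then show ?thesis using mp that(1,2) unfolding is_min_poly_def dM by blast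
    qed
    ultimately show ?thesis using mp unfolding is_min_poly_def dM by blast
  qed
  have A3: "cyclic_code (transpose_mat M) (dual_code n C)"
    unfolding cyclic_code_def dM
  proof (intro conjI ballI allI)
    show "dual_code n C \<subseteq> carrier_vec n" unfolding dual_code_def by auto
    show "0\<^sub>v n \<in> dual_code n C" unfolding dual_code_def using Cc by auto
    fix x assume x: "x \<in> dual_code n C"
    then have xc: "x \<in> carrier_vec n" and x0: "\<And>c. c \<in> C \<Longrightarrow> x \<bullet> c = 0"
      unfolding dual_code_def by auto
    show "transpose_mat M *\<^sub>v x \<in> dual_code n C"
      unfolding dual_code_def
    proof (intro CollectI conjI ballI)
      show "transpose_mat M *\<^sub>v x \<in> carrier_vec n" using M xc by simp
      fix c assume c: "c \<in> C"
      have "(transpose_mat M *\<^sub>v x) \<bullet> c = x \<bullet> (M *\<^sub>v c)"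
        by (rule transpose_vec_mult_scalar[OF M]) (use c Cc xc in auto)
      then show "(transpose_mat M *\<^sub>v x) \<bullet> c = 0" using x0[OF MC[OF c]] by simp
    qed
    fix a :: 'a
    show "a \<cdot>\<^sub>v x \<in> dual_code n C"
      unfolding dual_code_def
    proof (intro CollectI conjI ballI)
      show "a \<cdot>\<^sub>v x \<in> carrier_vec n" using xc by simp
      fix c assume c: "c \<in> C"
      then have "c \<in> carrier_vec n" using Cc by auto
      then show "(a \<cdot>\<^sub>v x) \<bullet> c = 0" using x0[OF c] xc by simp
    qed
  next
    fix x y assume x: "x \<in> dual_code n C" and y: "y \<in> dual_code n C"
    then have xc: "x \<in> carrier_vec n" and x0: "\<And>c. c \<in> C \<Longrightarrow> x \<bullet> c = 0"
      and yc: "y \<in> carrier_vec n" and y0: "\<And>c. c \<in> C \<Longrightarrow> y \<bullet> c = 0"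
      unfolding dual_code_def by auto
    show "x + y \<in> dual_code n C"
      unfolding dual_code_def
    proof (intro CollectI conjI ballI)
      show "x + y \<in> carrier_vec n" using xc yc by simp
      fix c assume c: "c \<in> C"
      then have "c \<in> carrier_vec n" using Cc by auto
      then have "(x + y) \<bullet> c = x \<bullet> c + y \<bullet> c" by (rule add_scalar_prod_distrib[OF xc yc])
      then show "(x + y) \<bullet> c = 0" using x0[OF c] y0[OF c] by simp
    qed
  qed
  have lh: "lead_coeff h = 1"
    using mp lg unfolding is_min_poly_def fgh lead_coeff_mult by simp
  have hd: "h dvd f" unfolding fgh by simp
  have code: "dual_code n C = code_of (transpose_mat M) cs.w h"
  proof
    show "dual_code n C \<subseteq> code_of (transpose_mat M) cs.w h"
    proof
      fix x assume x: "x \<in> dual_code n C"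
      then have xc: "x \<in> carrier_vec n" and x0: "\<And>c. c \<in> C \<Longrightarrow> x \<bullet> c = 0"
        unfolding dual_code_def by auto
      obtain P0 where P0: "x = mat_eval P0 (transpose_mat M) *\<^sub>v cs.w" using cs.reprT[OF xc] by blast
      have "cs.w \<bullet> (mat_eval (P0 * g * Q) M *\<^sub>v v) = 0" for Q
      proof -
        define c where "c = mat_eval Q M *\<^sub>v (mat_eval g M *\<^sub>v v)"
        have cC: "c \<in> C" unfolding Cform c_def by blast
        have cc: "c \<in> carrier_vec n" using cC Cc by auto
        have "0 = x \<bullet> c" using x0[OF cC] by simp
        also have "\<dots> = cs.w \<bullet> (mat_eval P0 M *\<^sub>v c)" unfolding P0 by (rule cs.meT_scalar[OF cc])
        also have "mat_eval P0 M *\<^sub>v c = mat_eval (P0 * (Q * g)) M *\<^sub>v v"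
          unfolding c_def cs.me_vec_mult[OF vc] cs.me_vec_mult[OF gvc] ..
        also have "P0 * (Q * g) = P0 * g * Q" by (simp add: ac_simps)
        finally show ?thesis by simp
      qed
      then have "f dvd P0 * g" by (rule cs.psi_dvd)
      then have "g * h dvd g * P0" unfolding fgh by (simp add: ac_simps)
      then have "h dvd P0" using g0 by simp
      then obtain P where P: "P0 = h * P" by (elim dvdE)
      have "x = mat_eval (P * h) (transpose_mat M) *\<^sub>v cs.w" unfolding P0 P by (simp add: ac_simps)
      also have "\<dots> = mat_eval P (transpose_mat M) *\<^sub>v (mat_eval h (transpose_mat M) *\<^sub>v cs.w)"
        by (rule cs.meT_vec_mult[OF cs.w(1), symmetric])
      finally show "x \<in> code_of (transpose_mat M) cs.w h" unfolding code_of_def by blast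
    qed
    show "code_of (transpose_mat M) cs.w h \<subseteq> dual_code n C"
    proof
      fix y assume "y \<in> code_of (transpose_mat M) cs.w h"
      then obtain P where P: "y = mat_eval P (transpose_mat M) *\<^sub>v (mat_eval h (transpose_mat M) *\<^sub>v cs.w)"
        unfolding code_of_def by blast
      have y2: "y = mat_eval (P * h) (transpose_mat M) *\<^sub>v cs.w"
        unfolding P by (rule cs.meT_vec_mult[OF cs.w(1)])
      have yc: "y \<in> carrier_vec n" unfolding y2 by (rule mult_mat_vec_carrier[OF me_carrier[OF cs.MT] cs.w(1)])
      have "y \<bullet> c = 0" if cC: "c \<in> C" for c
      proof -
        obtain Q where c: "c = mat_eval Q M *\<^sub>v (mat_eval g M *\<^sub>v v)" using cC unfolding Cform by blast
        have cc: "c \<in> carrier_vec n" using cC Cc by auto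
        have "y \<bullet> c = cs.w \<bullet> (mat_eval (P * h) M *\<^sub>v c)" unfolding y2 by (rule cs.meT_scalar[OF cc])
        also have "mat_eval (P * h) M *\<^sub>v c = mat_eval ((P * Q) * f) M *\<^sub>v v"
          unfolding c cs.me_vec_mult[OF vc] cs.me_vec_mult[OF gvc] fgh by (simp add: ac_simps)
        also have "\<dots> = 0\<^sub>v n"
        proof -
          have "mat_eval ((P * Q) * f) M = mat_eval (P * Q) M * mat_eval f M" by (rule me_mult[OF M])
          also have "\<dots> = 0\<^sub>m n n" unfolding cs.fM by (rule right_mult_zero_mat[OF me_carrier[OF M]])
          finally show ?thesis using vc by simp
        qed
        finally show ?thesis using cs.w(1) by simp
      qed
      then show "y \<in> dual_code n C" unfolding dual_code_def using yc by blast
    qed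
  qed
  have A4: "is_gen_poly K (transpose_mat M) f (dual_code n C) h"
    unfolding is_gen_poly_def using lh hd cs.cvT code by blast
  show ?thesis using A1 A2 A3 A4 by blast
qed

end
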